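(* Let $G=(V,E,s)$ be a flow graph and let $D$ be its dominator tree, with $t(v)$ denoting the parent of a vertex $v\neq s$ in $D$. (i) If $G'$ is obtained from $G$ by inserting an edge, then $D$ still has the sibling property with respect to $G'$: for any two siblings $v,w$ in $D$, $v$ does not dominate $w$ in $G'$. (An insertion may, however, violate the parent property of $D$.) (ii) If $G'=(V,E',s)$ is obtained from $G$ by deleting an edge, then $D$ still has the parent property with respect to $G'$: for every edge $(v,w)\in E'$ such that $v$ is reachable from $s$ in $G'$, $v$ is a descendant of $t(w)$ in $D$. (A deletion may, however, violate the sibling property of $D$.)
   Context: A flow graph $G=(V,E,s)$ is a directed graph with a distinguished start vertex $s$. A vertex is reachable if there is a path from $s$ to it. For reachable vertices, $w$ dominates $v$ if every path from $s$ to $v$ contains $w$. The immediate dominator $d(v)$ of a reachable $v\neq s$ is the proper dominator of $v$ dominated by all other proper dominators of $v$; the dominator tree $D$ is the tree on the reachable vertices rooted at $s$ in which the parent of each $v\neq s$ is $d(v)$. For a tree $T$ rooted at $s$ on the reachable vertices with parent function $t$: $T$ has the parent property if for every edge $(v,w)$ with $v$ reachable, $v$ is a descendant of $t(w)$ in $T$; $T$ has the sibling property if for all siblings $v,w$ in $T$, $v$ does not dominate $w$. *)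

theory Defs
  imports Main
begin

definition flow_graph :: "'a set \<Rightarrow> ('a \<times> 'a) set \<Rightarrow> 'a \<Rightarrow> bool" where
  "flow_graph V E s \<longleftrightarrow> finite V \<and> E \<subseteq> V \<times> V \<and> s \<in> V"

definition reachable :: "('a \<times> 'a) set \<Rightarrow> 'a \<Rightarrow> 'a \<Rightarrow> bool" where
  "reachable E s v \<longleftrightarrow> (s, v) \<in> E\<^sup>*"

definition is_path :: "('a \<times> 'a) set \<Rightarrow> 'a list \<Rightarrow> 'a \<Rightarrow> 'a \<Rightarrow> bool" where
  "is_path E xs u v \<longleftrightarrow> xs \<noteq> [] \<and> hd xs = u \<and> last xs = v \<and>
     (\<forall>i. Suc i < length xs \<longrightarrow> (xs ! i, xs ! Suc i) \<in> E)"

definition dominates :: "('a \<times> 'a) set \<Rightarrow> 'a \<Rightarrow> 'a \<Rightarrow> 'a \<Rightarrow> bool" where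
  "dominates E s w v \<longleftrightarrow> reachable E s w \<and> reachable E s v \<and>
     (\<forall>xs. is_path E xs s v \<longrightarrow> w \<in> set xs)"

definition is_idom :: "('a \<times> 'a) set \<Rightarrow> 'a \<Rightarrow> 'a \<Rightarrow> 'a \<Rightarrow> bool" where
  "is_idom E s w v \<longleftrightarrow> w \<noteq> v \<and> dominates E s w v \<and>
     (\<forall>u. u \<noteq> v \<and> dominates E s u v \<longrightarrow> dominates E s u w)"

definition idom :: "('a \<times> 'a) set \<Rightarrow> 'a \<Rightarrow> 'a \<Rightarrow> 'a" where
  "idom E s v = (THE w. is_idom E s w v)"

definition dom_tree :: "('a \<times> 'a) set \<Rightarrow> 'a \<Rightarrow> ('a \<times> 'a) set" where
  "dom_tree E s = {(idom E s v, v) | v. reachable E s v \<and> v \<noteq> s}"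

definition dom_descendant :: "('a \<times> 'a) set \<Rightarrow> 'a \<Rightarrow> 'a \<Rightarrow> 'a \<Rightarrow> bool" where
  "dom_descendant E s x u \<longleftrightarrow> (u, x) \<in> (dom_tree E s)\<^sup>*"

definition dom_siblings :: "('a \<times> 'a) set \<Rightarrow> 'a \<Rightarrow> 'a \<Rightarrow> 'a \<Rightarrow> bool" where
  "dom_siblings E s v w \<longleftrightarrow> v \<noteq> w \<and> reachable E s v \<and> reachable E s w \<and>
     v \<noteq> s \<and> w \<noteq> s \<and> idom E s v = idom E s w"

definition sibling_property :: "('a \<times> 'a) set \<Rightarrow> 'a \<Rightarrow> ('a \<times> 'a) set \<Rightarrow> bool" where
  "sibling_property E s E' \<longleftrightarrow>
     (\<forall>v w. dom_siblings E s v w \<longrightarrow> \<not> dominates E' s v w)"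

text \<open>Parent property of D (of (E,s)) w.r.t. (E',s); t(s) is undefined, so w \<noteq> s.\<close>
definition parent_property :: "('a \<times> 'a) set \<Rightarrow> 'a \<Rightarrow> ('a \<times> 'a) set \<Rightarrow> bool" where
  "parent_property E s E' \<longleftrightarrow>
     (\<forall>v w. (v, w) \<in> E' \<and> reachable E' s v \<and> w \<noteq> s \<longrightarrow>
        dom_descendant E s v (idom E s w))"

end

theory Submission
  imports Defs
begin

lemma path_iff:
  "is_path E xs u v \<longleftrightarrow> xs \<noteq> [] \<and> hd xs = u \<and> last xs = v \<and>
     successively (\<lambda>a b. (a,b) \<in> E) xs"
  unfolding is_path_def successively_conv_nth by blast

lemma succ_rtrancl:
  "successively (\<lambda>a b. (a,b) \<in> E) xs \<Longrightarrow> xs \<noteq> [] \<Longrightarrow> (hd xs, last xs) \<in> E\<^sup>*"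
proof (induction xs)
  case Nil then show ?case by simp
next
  case (Cons x xs)
  show ?case
  proof (cases "xs = []")
    case True then show ?thesis by simp
  next
    case False
    with Cons have "(x, hd xs) \<in> E" "(hd xs, last xs) \<in> E\<^sup>*"
      by (auto simp: successively_Cons)
    with False show ?thesis by simp
  qed
qed

lemma path_reach: "is_path E xs u v \<Longrightarrow> (u, v) \<in> E\<^sup>*"
  using succ_rtrancl path_iff by metis

lemma reach_path: "(u, v) \<in> E\<^sup>* \<Longrightarrow> \<exists>xs. is_path E xs u v"
proof (induction rule: rtrancl_induct)
  case base
  have "is_path E [u] u u" by (simp add: path_iff)
  then show ?case by blast
next
  case (step y z)
  then obtain xs where "is_path E xs u y" by blast
  then have "is_path E (xs @ [z]) u z" using step(2)
    by (auto simp: path_iff successively_append_iff)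
  then show ?case by blast
qed

lemma path_prefix:
  assumes "is_path E (ys @ x # zs) u v"
  shows "is_path E (ys @ [x]) u x"
proof -
  have e: "ys @ x # zs = (ys @ [x]) @ zs" by simp
  have a: "hd (ys @ x # zs) = u" "successively (\<lambda>a b. (a,b) \<in> E) ((ys @ [x]) @ zs)"
    using assms unfolding path_iff e by simp_all
  have "successively (\<lambda>a b. (a,b) \<in> E) (ys @ [x])" using a(2)
    by (subst (asm) successively_append_iff) (elim conjE)
  moreover have "hd (ys @ [x]) = u" using a(1) by (cases ys) simp_all
  ultimately show ?thesis unfolding path_iff by simp
qed

lemma path_suffix:
  assumes "is_path E (ys @ x # zs) u v" "zs \<noteq> []"
  shows "is_path E zs (hd zs) v" "(x, hd zs) \<in> E"
proof -
  have e: "ys @ x # zs = (ys @ [x]) @ zs" by simp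
  have a: "last ((ys @ [x]) @ zs) = v" "successively (\<lambda>a b. (a,b) \<in> E) ((ys @ [x]) @ zs)"
    using assms(1) unfolding path_iff e by simp_all
  have b: "successively (\<lambda>a b. (a,b) \<in> E) zs" "(last (ys @ [x]), hd zs) \<in> E"
    using a(2) assms(2) unfolding successively_append_iff by simp_all
  show "(x, hd zs) \<in> E" using b(2) by simp
  have "last zs = v" using a(1) assms(2) by simp
  then show "is_path E zs (hd zs) v" unfolding path_iff using b(1) assms(2) by simp
qed

lemma path_join:
  assumes "is_path E xs u x" "is_path E zs y v" "(x, y) \<in> E"
  shows "is_path E (xs @ zs) u v"
proof -
  have a: "xs \<noteq> []" "hd xs = u" "last xs = x" "successively (\<lambda>a b. (a,b) \<in> E) xs"
    using assms(1) unfolding path_iff by simp_all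
  have b: "zs \<noteq> []" "hd zs = y" "last zs = v" "successively (\<lambda>a b. (a,b) \<in> E) zs"
    using assms(2) unfolding path_iff by simp_all
  have "successively (\<lambda>a b. (a,b) \<in> E) (xs @ zs)"
    unfolding successively_append_iff using a b assms(3) by simp
  then show ?thesis unfolding path_iff using a b by simp
qed

lemma path_mono: "is_path E xs u v \<Longrightarrow> E \<subseteq> E' \<Longrightarrow> is_path E' xs u v"
  unfolding is_path_def by blast

lemma dom_refl: "reachable E s v \<Longrightarrow> dominates E s v v"
  unfolding dominates_def is_path_def by (metis last_in_set)

lemma dom_s: "dominates E s d s \<Longrightarrow> d = s"
proof -
  assume a: "dominates E s d s"
  have "is_path E [s] s s" by (simp add: path_iff)
  with a show ?thesis unfolding dominates_def by auto
qed

lemma dom_trans: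
  assumes "dominates E s a b" "dominates E s b c"
  shows "dominates E s a c"
  unfolding dominates_def
proof (intro conjI allI impI)
  show "reachable E s a" "reachable E s c" using assms unfolding dominates_def by auto
  fix xs assume p: "is_path E xs s c"
  then have "b \<in> set xs" using assms(2) unfolding dominates_def by auto
  then obtain ys zs where xs: "xs = ys @ b # zs" by (meson split_list)
  then have "is_path E (ys @ [b]) s b" using p path_prefix by metis
  then have "a \<in> set (ys @ [b])" using assms(1) unfolding dominates_def by auto
  then show "a \<in> set xs" using xs by auto
qed

lemma path_last_in: "is_path E xs u v \<Longrightarrow> v \<in> set xs"
  unfolding path_iff by (metis last_in_set)

lemma domD: "dominates E s w v \<Longrightarrow> is_path E xs s v \<Longrightarrow> w \<in> set xs"
  unfolding dominates_def by blast

lemma dom_reach: "dominates E s w v \<Longrightarrow> reachable E s w \<and> reachable E s v"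
  unfolding dominates_def by blast

lemma reach_path': "reachable E s v \<Longrightarrow> \<exists>xs. is_path E xs s v"
  unfolding reachable_def by (rule reach_path)

lemma dom_antisym:
  assumes "dominates E s a b" "dominates E s b a"
  shows "a = b"
proof (rule ccontr)
  assume ne: "a \<noteq> b"
  obtain xs where p: "is_path E xs s b" using dom_reach[OF assms(1)] reach_path'[of E s b] by blast
  have "b \<in> set xs" using p by (rule path_last_in)
  then obtain ys zs where xs: "xs = ys @ b # zs" "b \<notin> set ys" using split_list_first by metis
  have p2: "is_path E (ys @ [b]) s b" using p xs(1) path_prefix by metis
  have "a \<in> set (ys @ [b])" using domD[OF assms(1) p2] .
  with ne have "a \<in> set ys" by simp
  then obtain as bs where ys: "ys = as @ a # bs" by (meson split_list)
  have p3: "is_path E (as @ a # (bs @ [b])) s b" using p2 ys by simp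
  have "is_path E (as @ [a]) s a" using path_prefix[OF p3] .
  then have "b \<in> set (as @ [a])" using domD[OF assms(2)] by blast
  with ne xs(2) ys show False by simp
qed

lemma dom_total:
  assumes "dominates E s a v" "dominates E s b v" "a \<noteq> v" "b \<noteq> v"
  shows "dominates E s a b \<or> dominates E s b a"
proof (rule ccontr)
  assume nt: "\<not> ?thesis"
  have ra: "reachable E s a" and rb: "reachable E s b"
    using dom_reach[OF assms(1)] dom_reach[OF assms(2)] by blast+
  have "\<not> dominates E s a b" using nt by blast
  then obtain Q1 where q1: "is_path E Q1 s b" "a \<notin> set Q1"
    using ra rb unfolding dominates_def by blast
  have "\<not> dominates E s b a" using nt by blast
  then obtain Q2 where q2: "is_path E Q2 s a" "b \<notin> set Q2"
    using ra rb unfolding dominates_def by blast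
  obtain P where p: "is_path E P s v" using dom_reach[OF assms(1)] reach_path'[of E s v] by blast
  have "b \<in> set P" using domD[OF assms(2) p] .
  then obtain ys zs where P: "P = ys @ b # zs" "b \<notin> set zs" using split_list_last by metis
  have lP: "last P = v" using p by (simp add: path_iff)
  have zne: "zs \<noteq> []" proof assume "zs = []" with lP P assms(4) show False by simp qed
  show False
  proof (cases "a \<in> set zs")
    case False
    have pp: "is_path E (ys @ b # zs) s v" using p P by simp
    have "is_path E (Q1 @ zs) s v" using path_join[OF q1(1) path_suffix(1)[OF pp zne] path_suffix(2)[OF pp zne]] .
    then have "a \<in> set (Q1 @ zs)" using domD[OF assms(1)] by blast
    with False q1 show False by simp
  next
    case True
    then obtain ys' zs' where Z: "zs = ys' @ a # zs'" "a \<notin> set zs'" using split_list_last by metis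
    have P2: "P = (ys @ b # ys') @ a # zs'" using P Z by simp
    have zne': "zs' \<noteq> []" proof assume "zs' = []" with lP P2 assms(3) show False by simp qed
    have pp: "is_path E ((ys @ b # ys') @ a # zs') s v" using p P2 by simp
    have "is_path E (Q2 @ zs') s v" using path_join[OF q2(1) path_suffix(1)[OF pp zne'] path_suffix(2)[OF pp zne']] .
    then have "b \<in> set (Q2 @ zs')" using domD[OF assms(2)] by blast
    with q2 P Z show False by simp
  qed
qed

lemma reach_V:
  assumes "flow_graph V E s" "reachable E s v" shows "v \<in> V"
proof -
  have "(s, v) \<in> E\<^sup>*" using assms(2) unfolding reachable_def .
  then show ?thesis
    by (induction rule: rtrancl_induct) (use assms(1) in \<open>auto simp: flow_graph_def\<close>)
qed

lemma doms_finite: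
  assumes "flow_graph V E s" shows "finite {u. dominates E s u v}"
proof -
  have "{u. dominates E s u v} \<subseteq> V" using reach_V[OF assms] unfolding dominates_def by auto
  then show ?thesis using assms unfolding flow_graph_def using finite_subset by blast
qed

lemma finite_max_exists:
  fixes f :: "'b \<Rightarrow> nat"
  assumes "finite S" "x \<in> S" shows "\<exists>d\<in>S. \<forall>u\<in>S. f u \<le> f d"
proof -
  have "Max (f ` S) \<in> f ` S" using assms by (intro Max_in) auto
  then obtain d where "d \<in> S" "f d = Max (f ` S)" by auto
  moreover have "\<forall>u\<in>S. f u \<le> Max (f ` S)" using assms by auto
  ultimately have "d \<in> S" "\<forall>u\<in>S. f u \<le> f d" by simp_all
  then show ?thesis by blast
qed

lemma idom_exists:
  assumes fg: "flow_graph V E s" and r: "reachable E s v" and vs: "v \<noteq> s"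
  shows "is_idom E s (idom E s v) v"
proof -
  let ?S = "{u. u \<noteq> v \<and> dominates E s u v}"
  let ?f = "\<lambda>d. card {u. dominates E s u d}"
  have fin: "finite ?S" using doms_finite[OF fg, of v] by (rule finite_subset[rotated]) blast
  have "dominates E s s v" unfolding dominates_def
  proof (intro conjI allI impI)
    show "reachable E s s" unfolding reachable_def by simp
    show "reachable E s v" by fact
    fix xs assume "is_path E xs s v"
    then have "xs \<noteq> []" "hd xs = s" unfolding path_iff by simp_all
    then show "s \<in> set xs" using hd_in_set by metis
  qed
  then have sS: "s \<in> ?S" using vs by auto
  obtain d where dS: "d \<in> ?S" and dmax0: "\<forall>u\<in>?S. ?f u \<le> ?f d"
    using finite_max_exists[OF fin sS, of ?f] by blast
  have dmax: "?f u \<le> ?f d" if "u \<in> ?S" for u using dmax0 that by blast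
  have isd: "is_idom E s d v"
    unfolding is_idom_def
  proof (intro conjI allI impI)
    show "d \<noteq> v" "dominates E s d v" using dS by auto
    fix u assume u: "u \<noteq> v \<and> dominates E s u v"
    show "dominates E s u d"
    proof (rule ccontr)
      assume nd: "\<not> dominates E s u d"
      have dv: "d \<noteq> v" "dominates E s d v" using dS by simp_all
      have du: "dominates E s d u" using dom_total[of E s u v d] u dv nd by blast
      have sub: "{x. dominates E s x d} \<subseteq> {x. dominates E s x u}"
      proof (rule subsetI)
        fix x assume "x \<in> {x. dominates E s x d}"
        then show "x \<in> {x. dominates E s x u}" using dom_trans[OF _ du] by simp
      qed
      have "reachable E s u" using u unfolding dominates_def by blast
      then have "u \<in> {x. dominates E s x u}" using dom_refl by simp
      moreover have "u \<notin> {x. dominates E s x d}" using nd by simp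
      ultimately have "{x. dominates E s x d} \<subset> {x. dominates E s x u}" using sub by blast
      then have "?f d < ?f u" using doms_finite[OF fg, of u] by (rule psubset_card_mono[rotated])
      moreover have "u \<in> ?S" using u by simp
      ultimately show False using dmax by (meson leD)
    qed
  qed
  have uniq: "w = d" if w: "is_idom E s w v" for w
  proof -
    have "w \<noteq> v \<and> dominates E s w v" using w unfolding is_idom_def by blast
    then have 1: "dominates E s w d" using isd unfolding is_idom_def by blast
    have "d \<noteq> v \<and> dominates E s d v" using isd unfolding is_idom_def by blast
    then have 2: "dominates E s d w" using w unfolding is_idom_def by blast
    show ?thesis using dom_antisym[OF 1 2] .
  qed
  have "idom E s v = d" unfolding idom_def using isd uniq by (rule the_equality)
  then show ?thesis using isd by simp
qed

lemma ancestor: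
  assumes fg: "flow_graph V E s"
  shows "dominates E s d v \<Longrightarrow> (d, v) \<in> (dom_tree E s)\<^sup>*"
proof (induction "card {u. dominates E s u v}" arbitrary: v rule: less_induct)
  case less
  show ?case
  proof (cases "d = v")
    case True then show ?thesis by simp
  next
    case False
    have r: "reachable E s v" using dom_reach[OF less.prems] by blast
    have vs: "v \<noteq> s"
    proof
      assume "v = s"
      then have "dominates E s d s" using less.prems by simp
      then have "d = s" by (rule dom_s)
      with False \<open>v = s\<close> show False by simp
    qed
    let ?p = "idom E s v"
    have ip: "is_idom E s ?p v" using idom_exists[OF fg r vs] .
    have dp: "dominates E s d ?p" using ip False less.prems unfolding is_idom_def by blast
    have pv: "dominates E s ?p v" "?p \<noteq> v" using ip unfolding is_idom_def by blast+
    have sub: "{x. dominates E s x ?p} \<subseteq> {x. dominates E s x v}"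
    proof (rule subsetI)
      fix x assume "x \<in> {x. dominates E s x ?p}"
      then show "x \<in> {x. dominates E s x v}" using dom_trans[OF _ pv(1)] by simp
    qed
    have "v \<in> {x. dominates E s x v}" using r dom_refl by simp
    moreover have "v \<notin> {x. dominates E s x ?p}"
    proof
      assume "v \<in> {x. dominates E s x ?p}"
      then have "dominates E s v ?p" by simp
      then have "v = ?p" using dom_antisym[OF _ pv(1)] by blast
      with pv(2) show False by simp
    qed
    ultimately have "{x. dominates E s x ?p} \<subset> {x. dominates E s x v}" using sub by blast
    then have "card {x. dominates E s x ?p} < card {x. dominates E s x v}"
      using doms_finite[OF fg, of v] by (rule psubset_card_mono[rotated])
    then have "(d, ?p) \<in> (dom_tree E s)\<^sup>*" using dp by (rule less.hyps)
    moreover have "(?p, v) \<in> dom_tree E s" unfolding dom_tree_def using r vs by blast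
    ultimately show ?thesis by (rule rtrancl_into_rtrancl)
  qed
qed

theorem proposition1:
  fixes V :: "'a set" and E :: "('a \<times> 'a) set" and s :: 'a
  assumes "flow_graph V E s"
  shows "(\<forall>x y. x \<in> V \<and> y \<in> V \<longrightarrow> sibling_property E s (insert (x, y) E))
       \<and> (\<forall>e \<in> E. parent_property E s (E - {e}))"
proof (intro conjI allI impI ballI)
  fix x y assume "x \<in> V \<and> y \<in> V"
  show "sibling_property E s (insert (x, y) E)"
    unfolding sibling_property_def
  proof (intro allI impI notI)
    fix v w assume sib: "dom_siblings E s v w" and d': "dominates (insert (x, y) E) s v w"
    have rv: "reachable E s v" and rw: "reachable E s w" and vw: "v \<noteq> w"
      and vs: "v \<noteq> s" and ws: "w \<noteq> s" and eq: "idom E s v = idom E s w"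
      using sib unfolding dom_siblings_def by auto
    have dvw: "dominates E s v w" unfolding dominates_def
      using rv rw d' path_mono[of E _ s w "insert (x, y) E"] unfolding dominates_def by blast
    have iw: "is_idom E s (idom E s w) w" using idom_exists[OF assms rw ws] .
    have iv: "is_idom E s (idom E s v) v" using idom_exists[OF assms rv vs] .
    have "dominates E s v (idom E s v)" using iw dvw vw eq unfolding is_idom_def by metis
    moreover have "dominates E s (idom E s v) v" "idom E s v \<noteq> v" using iv unfolding is_idom_def by auto
    ultimately show False using dom_antisym by metis
  qed
next
  fix e assume "e \<in> E"
  show "parent_property E s (E - {e})"
    unfolding parent_property_def
  proof (intro allI impI)
    fix v w assume a: "(v, w) \<in> E - {e} \<and> reachable (E - {e}) s v \<and> w \<noteq> s"
    have rv: "reachable E s v" using a rtrancl_mono[of "E - {e}" E] unfolding reachable_def by blast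
    have vw: "(v, w) \<in> E" using a by auto
    have rw: "reachable E s w" using rv vw unfolding reachable_def by simp
    let ?d = "idom E s w"
    have id: "is_idom E s ?d w" using idom_exists[OF assms rw] a by auto
    have "dominates E s ?d v" unfolding dominates_def
    proof (intro conjI allI impI)
      show "reachable E s ?d" using id unfolding is_idom_def dominates_def by auto
      show "reachable E s v" by fact
      fix xs assume p: "is_path E xs s v"
      have "is_path E (xs @ [w]) s w" using path_join[OF p _ vw, of "[w]"] by (simp add: path_iff)
      then have "?d \<in> set (xs @ [w])" using id unfolding is_idom_def dominates_def by blast
      then show "?d \<in> set xs" using id unfolding is_idom_def by auto
    qed
    then show "dom_descendant E s v ?d" unfolding dom_descendant_def using ancestor[OF assms] by blast
  qed
qed

end
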